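(* For any positive integers $k$ and $c$, there exists a connected cubic graph $G$ with $\omega(G) = 2k$ and $\mu_3(G)\geq c$.
   Context: A 1-factor is a spanning 1-regular subgraph. $\mu_3(G)$ is the minimum, over all lists (with possible repetition) of three 1-factors of $G$, of the number of edges of $G$ contained in none of them. The oddness $\omega(G)$ is the minimum number of odd circuits in a 2-factor of $G$. *)

theory Defs
  imports Main
begin

definition graph :: "'a set \<Rightarrow> 'a set set \<Rightarrow> bool" where
  "graph V E \<longleftrightarrow> finite V \<and> (\<forall>e\<in>E. e \<subseteq> V \<and> card e = 2)"

definition degree :: "'a set set \<Rightarrow> 'a \<Rightarrow> nat" where
  "degree E v = card {e\<in>E. v \<in> e}"

definition cubic :: "'a set \<Rightarrow> 'a set set \<Rightarrow> bool" where
  "cubic V E \<longleftrightarrow> graph V E \<and> (\<forall>v\<in>V. degree E v = 3)"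

definition adj :: "'a set set \<Rightarrow> ('a \<times> 'a) set" where
  "adj E = {(u, v). {u, v} \<in> E}"

definition connected_graph :: "'a set \<Rightarrow> 'a set set \<Rightarrow> bool" where
  "connected_graph V E \<longleftrightarrow> (\<forall>u\<in>V. \<forall>v\<in>V. (u, v) \<in> (adj E)\<^sup>*)"

definition one_factor :: "'a set \<Rightarrow> 'a set set \<Rightarrow> 'a set set \<Rightarrow> bool" where
  "one_factor V E M \<longleftrightarrow> M \<subseteq> E \<and> (\<forall>v\<in>V. degree M v = 1)"

definition two_factor :: "'a set \<Rightarrow> 'a set set \<Rightarrow> 'a set set \<Rightarrow> bool" where
  "two_factor V E F \<longleftrightarrow> F \<subseteq> E \<and> (\<forall>v\<in>V. degree F v = 2)"

text \<open>Vertex sets of the connected components of the spanning subgraph (V, F).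
For a 2-factor these are exactly the vertex sets of its circuits.\<close>
definition components :: "'a set \<Rightarrow> 'a set set \<Rightarrow> 'a set set" where
  "components V F = (\<lambda>v. {u\<in>V. (v, u) \<in> (adj F)\<^sup>*}) ` V"

definition odd_circuits :: "'a set \<Rightarrow> 'a set set \<Rightarrow> nat" where
  "odd_circuits V F = card {C\<in>components V F. odd (card C)}"

definition oddness :: "'a set \<Rightarrow> 'a set set \<Rightarrow> nat" where
  "oddness V E = Min {odd_circuits V F | F. two_factor V E F}"

definition mu3 :: "'a set \<Rightarrow> 'a set set \<Rightarrow> nat" where
  "mu3 V E = Min {card (E - (M1 \<union> M2 \<union> M3)) | M1 M2 M3.
      one_factor V E M1 \<and> one_factor V E M2 \<and> one_factor V E M3}"

end

theory Submission imports Defs begin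

definition vx :: "nat \<Rightarrow> nat \<Rightarrow> nat" where "vx j s = 8*j+s"

lemma vx_inj[simp]: "s < 8 \<Longrightarrow> t < 8 \<Longrightarrow> (vx j s = vx i t) = (j = i \<and> s = t)"
  unfolding vx_def by presburger

lemma vx_div[simp]: "s < 8 \<Longrightarrow> vx j s div 8 = j" unfolding vx_def by simp
lemma vx_mod[simp]: "s < 8 \<Longrightarrow> vx j s mod 8 = s" unfolding vx_def by simp

definition rp :: "nat \<Rightarrow> nat" where "rp j = (if j = 0 then vx 0 7 else vx j 1)"
definition lp :: "nat \<Rightarrow> nat \<Rightarrow> nat" where "lp m j = (if j = Suc m then vx j 7 else vx j 0)"

definition leafnb :: "nat \<Rightarrow> nat \<Rightarrow> nat \<Rightarrow> nat set" where
 "leafnb j e s = (if s=7 then {vx j 2, vx j 3, e} else if s=2 \<or> s=3 then {vx j 7, vx j 4, vx j 5}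
    else if s = 4 then {vx j 2, vx j 3, vx j 5} else if s=5 then {vx j 2, vx j 3, vx j 4} else {})"

definition nb :: "nat \<Rightarrow> nat \<Rightarrow> nat \<Rightarrow> nat \<Rightarrow> nat set" where
 "nb K m j s = (if j = 0 then leafnb j (lp m 1) s
   else if j = Suc m then leafnb j (rp m) s
   else if j < K then (if s = 0 then {vx j 1, vx j 6, rp (j-1)} else if s = 1 then {vx j 0, vx j 6, lp m (j+1)}
         else if s = 6 then {vx j 0, vx j 1, vx j 7} else leafnb j (vx j 6) s)
   else if j \<le> m then (if s=0 then {vx j 2, vx j 3, rp (j-1)} else if s=1 then {vx j 2, vx j 3, lp m (j+1)}
         else if s=2 then {vx j 0, vx j 1, vx j 3} else if s=3 then {vx j 0, vx j 1, vx j 2} else {})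
   else {})"

definition slots :: "nat \<Rightarrow> nat \<Rightarrow> nat \<Rightarrow> nat set" where
 "slots K m j = (if j = 0 \<or> j = Suc m then {2,3,4,5,7} else if j < K then {0,1,2,3,4,5,6,7}
    else if j \<le> m then {0,1,2,3} else {})"

definition VV :: "nat \<Rightarrow> nat \<Rightarrow> nat set" where
 "VV K m = (\<Union>j\<in>{..Suc m}. vx j ` slots K m j)"

definition nbr :: "nat \<Rightarrow> nat \<Rightarrow> nat \<Rightarrow> nat set" where
 "nbr K m v = nb K m (v div 8) (v mod 8)"

lemma slots_lt: "s \<in> slots K m j \<Longrightarrow> s < 8" unfolding slots_def by (auto split: if_splits)

lemma mem_VV: "v \<in> VV K m \<longleftrightarrow> v div 8 \<le> Suc m \<and> v mod 8 \<in> slots K m (v div 8)"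
proof
  assume "v \<in> VV K m" then obtain j s where "j \<le> Suc m" "s \<in> slots K m j" "v = vx j s"
    unfolding VV_def by auto
  then show "v div 8 \<le> Suc m \<and> v mod 8 \<in> slots K m (v div 8)" using slots_lt by auto
next
  assume a: "v div 8 \<le> Suc m \<and> v mod 8 \<in> slots K m (v div 8)"
  have "v = vx (v div 8) (v mod 8)" unfolding vx_def by simp
  then show "v \<in> VV K m" using a unfolding VV_def by blast
qed

lemma mem_VV_vx[simp]: "s < 8 \<Longrightarrow> vx j s \<in> VV K m \<longleftrightarrow> j \<le> Suc m \<and> s \<in> slots K m j"
  by (simp add: mem_VV)

lemma nbr_vx[simp]: "s < 8 \<Longrightarrow> nbr K m (vx j s) = nb K m j s"
  by (simp add: nbr_def)



lemma nbL0: "nb K m 0 s = leafnb 0 (lp m 1) s" by (simp add: nb_def)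
lemma nbL1: "nb K m (Suc m) s = leafnb (Suc m) (rp m) s" by (simp add: nb_def)
lemma nbT: "0<j \<Longrightarrow> j<K \<Longrightarrow> K \<le> m \<Longrightarrow> nb K m j s = (if s = 0 then {vx j 1, vx j 6, rp (j-1)} else if s = 1 then {vx j 0, vx j 6, lp m (j+1)}
         else if s = 6 then {vx j 0, vx j 1, vx j 7} else leafnb j (vx j 6) s)" by (simp add: nb_def)
lemma nbD: "0<K \<Longrightarrow> K \<le> j \<Longrightarrow> j \<le> m \<Longrightarrow> nb K m j s = (if s=0 then {vx j 2, vx j 3, rp (j-1)} else if s=1 then {vx j 2, vx j 3, lp m (j+1)}
         else if s=2 then {vx j 0, vx j 1, vx j 3} else if s=3 then {vx j 0, vx j 1, vx j 2} else {})" by (simp add: nb_def)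
lemma slL0: "slots K m 0 = {2,3,4,5,7}" by (simp add: slots_def)
lemma slL1: "slots K m (Suc m) = {2,3,4,5,7}" by (simp add: slots_def)
lemma slT: "0<j \<Longrightarrow> j<K \<Longrightarrow> K \<le> m \<Longrightarrow> slots K m j = {0,1,2,3,4,5,6,7}" by (simp add: slots_def)
lemma slD: "0<K \<Longrightarrow> K \<le> j \<Longrightarrow> j \<le> m \<Longrightarrow> slots K m j = {0,1,2,3}" by (simp add: slots_def)

lemma rp_vx: "rp i = (if i = 0 then vx 0 7 else vx i 1)" by (simp add: rp_def)

lemma port: assumes "1 \<le> K" "K \<le> m" "i \<le> m"
  shows "rp i \<in> VV K m \<and> lp m (Suc i) \<in> VV K m \<and> lp m (Suc i) \<in> nbr K m (rp i) \<and> rp i \<in> nbr K m (lp m (Suc i))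
     \<and> rp i \<noteq> lp m (Suc i)"
proof -
  have A: "rp i \<in> VV K m \<and> lp m (Suc i) \<in> nbr K m (rp i)"
  proof -
    consider "i = 0" | "0 < i \<and> i < K" | "K \<le> i" by linarith
    then show ?thesis
    proof cases
      case 1 thus ?thesis using assms by (simp add: rp_def slL0 nbL0 leafnb_def)
    next
      case 2 thus ?thesis using assms by (simp add: rp_def slT nbT)
    next
      case 3 thus ?thesis using assms by (simp add: rp_def slD nbD)
    qed
  qed
  have B: "lp m (Suc i) \<in> VV K m \<and> rp i \<in> nbr K m (lp m (Suc i))"
  proof -
    consider "i = m" | "Suc i < K" | "K \<le> Suc i \<and> i < m" using assms by linarith
    then show ?thesis
    proof cases
      case 1 thus ?thesis using assms by (simp add: lp_def slL1 nbL1 leafnb_def)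
    next
      case 2 thus ?thesis using assms by (simp add: lp_def slT nbT)
    next
      case 3 thus ?thesis using assms by (simp add: lp_def slD nbD)
    qed
  qed
  have C: "rp i \<noteq> lp m (Suc i)" by (simp add: rp_def lp_def)
  show ?thesis using A B C by blast
qed

lemma port': assumes "1 \<le> K" "K \<le> m" "0 < j" "j \<le> m"
  shows "rp (j-1) \<in> VV K m \<and> vx j 0 \<in> nbr K m (rp (j-1)) \<and> rp (j-1) \<noteq> vx j 0"
  using port[OF assms(1,2), of "j-1"] assms by (simp add: lp_def)

lemma port'': assumes "1 \<le> K" "K \<le> m" "0 < j" "j \<le> m"
  shows "lp m (Suc j) \<in> VV K m \<and> vx j 1 \<in> nbr K m (lp m (Suc j)) \<and> lp m (Suc j) \<noteq> vx j 1"
  using port[OF assms(1,2), of "j"] assms by (simp add: rp_def)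

lemma sym_T: assumes "1 \<le> K" "K \<le> m" "0 < j" "j < K" "s \<in> slots K m j" "w \<in> nb K m j s"
  shows "w \<in> VV K m \<and> vx j s \<in> nbr K m w \<and> w \<noteq> vx j s"
proof -
  have s: "s \<in> {0,1,2,3,4,5,6,7}" using assms by (simp add: slT)
  note [simp] = slT[OF assms(3,4,2)] nbT[OF assms(3,4,2)] leafnb_def
  have P1: "rp (j-1) \<in> VV K m \<and> vx j 0 \<in> nbr K m (rp (j-1)) \<and> rp (j-1) \<noteq> vx j 0" using port'[OF assms(1,2,3)] assms by simp
  have P2: "lp m (Suc j) \<in> VV K m \<and> vx j 1 \<in> nbr K m (lp m (Suc j)) \<and> lp m (Suc j) \<noteq> vx j 1" using port''[OF assms(1,2,3)] assms by simp
  have j: "j \<le> Suc m" "j \<noteq> Suc m" "j \<noteq> 0" using assms by auto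
  have "w \<in> VV K m \<and> vx j 0 \<in> nbr K m w \<and> w \<noteq> vx j 0" if "w \<in> nb K m j 0" for w
    using that P1 j by auto
  moreover have "w \<in> VV K m \<and> vx j 1 \<in> nbr K m w \<and> w \<noteq> vx j 1" if "w \<in> nb K m j 1" for w
    using that P2 j by auto
  moreover have "w \<in> VV K m \<and> vx j 6 \<in> nbr K m w \<and> w \<noteq> vx j 6" if "w \<in> nb K m j 6" for w
    using that j by auto
  moreover have "w \<in> VV K m \<and> vx j 2 \<in> nbr K m w \<and> w \<noteq> vx j 2" if "w \<in> nb K m j 2" for w
    using that j by auto
  moreover have "w \<in> VV K m \<and> vx j 3 \<in> nbr K m w \<and> w \<noteq> vx j 3" if "w \<in> nb K m j 3" for w
    using that j by auto
  moreover have "w \<in> VV K m \<and> vx j 4 \<in> nbr K m w \<and> w \<noteq> vx j 4" if "w \<in> nb K m j 4" for w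
    using that j by auto
  moreover have "w \<in> VV K m \<and> vx j 5 \<in> nbr K m w \<and> w \<noteq> vx j 5" if "w \<in> nb K m j 5" for w
    using that j by auto
  moreover have "w \<in> VV K m \<and> vx j 7 \<in> nbr K m w \<and> w \<noteq> vx j 7" if "w \<in> nb K m j 7" for w
    using that j by auto
  ultimately show ?thesis using s assms(6) by (elim insertE emptyE) blast+
qed

lemma sym_D: assumes "1 \<le> K" "K \<le> m" "K \<le> j" "j \<le> m" "s \<in> slots K m j" "w \<in> nb K m j s"
  shows "w \<in> VV K m \<and> vx j s \<in> nbr K m w \<and> w \<noteq> vx j s"
proof -
  have K0: "0 < K" using assms by simp
  have s: "s \<in> {0,1,2,3}" using assms by (simp add: slD)
  note [simp] = slD[OF K0 assms(3,4)] nbD[OF K0 assms(3,4)]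
  have P1: "rp (j-1) \<in> VV K m \<and> vx j 0 \<in> nbr K m (rp (j-1)) \<and> rp (j-1) \<noteq> vx j 0" using port'[OF assms(1,2) _ assms(4)] assms K0 by simp
  have P2: "lp m (Suc j) \<in> VV K m \<and> vx j 1 \<in> nbr K m (lp m (Suc j)) \<and> lp m (Suc j) \<noteq> vx j 1" using port''[OF assms(1,2) _ assms(4)] assms K0 by simp
  show ?thesis using s assms P1 P2 by (elim insertE emptyE; simp; elim disjE; simp)
qed

lemma sym_L0: assumes "1 \<le> K" "K \<le> m" "s \<in> slots K m 0" "w \<in> nb K m 0 s"
  shows "w \<in> VV K m \<and> vx 0 s \<in> nbr K m w \<and> w \<noteq> vx 0 s"
proof -
  have s: "s \<in> {2,3,4,5,7}" using assms by (simp add: slL0)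
  note [simp] = slL0 nbL0 leafnb_def
  have P: "lp m 1 \<in> VV K m \<and> vx 0 7 \<in> nbr K m (lp m 1) \<and> lp m 1 \<noteq> vx 0 7" using port[OF assms(1,2), of 0] by (simp add: rp_def)
  show ?thesis using s assms P by (elim insertE emptyE; simp; elim disjE; simp)
qed

lemma sym_L1: assumes "1 \<le> K" "K \<le> m" "s \<in> slots K m (Suc m)" "w \<in> nb K m (Suc m) s"
  shows "w \<in> VV K m \<and> vx (Suc m) s \<in> nbr K m w \<and> w \<noteq> vx (Suc m) s"
proof -
  have s: "s \<in> {2,3,4,5,7}" using assms by (simp add: slL1)
  note [simp] = slL1 nbL1 leafnb_def
  have P: "rp m \<in> VV K m \<and> vx (Suc m) 7 \<in> nbr K m (rp m) \<and> rp m \<noteq> vx (Suc m) 7" using port[OF assms(1,2), of m] by (simp add: lp_def)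
  show ?thesis using s assms P by (elim insertE emptyE; simp; elim disjE; simp)
qed

lemma nbr_sym: assumes "1 \<le> K" "K \<le> m" "v \<in> VV K m" "w \<in> nbr K m v"
  shows "w \<in> VV K m \<and> v \<in> nbr K m w \<and> w \<noteq> v"
proof -
  obtain j s where js: "j \<le> Suc m" "s \<in> slots K m j" "v = vx j s" using assms(3) unfolding VV_def by auto
  have s8: "s < 8" using js slots_lt by auto
  have w: "w \<in> nb K m j s" using assms(4) js s8 by simp
  consider "j = 0" | "j = Suc m" | "0 < j \<and> j < K" | "K \<le> j \<and> j \<le> m" using js assms by linarith
  then show ?thesis
  proof cases
    case 1 thus ?thesis using sym_L0[OF assms(1,2)] js w by auto
  next
    case 2 thus ?thesis using sym_L1[OF assms(1,2)] js w by auto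
  next
    case 3 thus ?thesis using sym_T[OF assms(1,2)] js w by auto
  next
    case 4 thus ?thesis using sym_D[OF assms(1,2)] js w by auto
  qed
qed

definition edg :: "'a set \<Rightarrow> ('a \<Rightarrow> 'a set) \<Rightarrow> 'a set set" where
  "edg V N = {{a,b}|a b. a \<in> V \<and> b \<in> N a}"

definition symN :: "'a set \<Rightarrow> ('a \<Rightarrow> 'a set) \<Rightarrow> bool" where
  "symN V N \<longleftrightarrow> (\<forall>v\<in>V. \<forall>w\<in>N v. w \<in> V \<and> v \<in> N w \<and> w \<noteq> v)"

lemma edg_at: assumes "symN V N" "v \<in> V"
  shows "{e \<in> edg V N. v \<in> e} = (\<lambda>w. {v,w}) ` N v"
proof
  show "{e \<in> edg V N. v \<in> e} \<subseteq> (\<lambda>w. {v,w}) ` N v"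
  proof
    fix e assume "e \<in> {e \<in> edg V N. v \<in> e}"
    then obtain a b where e: "e = {a,b}" "a \<in> V" "b \<in> N a" "v \<in> e" unfolding edg_def by auto
    show "e \<in> (\<lambda>w. {v,w}) ` N v"
    proof (cases "v = a")
      case True thus ?thesis using e by auto
    next
      case False hence "v = b" using e by auto
      have a: "a \<in> N v" using e assms(1) \<open>v = b\<close> unfolding symN_def by blast
      have "e = {v,a}" using e \<open>v = b\<close> by blast
      thus ?thesis using a by blast
    qed
  qed
next
  show "(\<lambda>w. {v,w}) ` N v \<subseteq> {e \<in> edg V N. v \<in> e}" using assms unfolding edg_def by auto
qed

lemma deg_sub: assumes "symN V N" "v \<in> V" "F \<subseteq> edg V N"
  shows "degree F v = card {w \<in> N v. {v,w} \<in> F}"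
proof -
  have "{e \<in> F. v \<in> e} = {e \<in> edg V N. v \<in> e} \<inter> F" using assms(3) by auto
  also have "\<dots> = (\<lambda>w. {v,w}) ` {w \<in> N v. {v,w} \<in> F}" using edg_at[OF assms(1,2)] by auto
  finally have eq: "{e \<in> F. v \<in> e} = (\<lambda>w. {v,w}) ` {w \<in> N v. {v,w} \<in> F}" .
  have "inj_on (\<lambda>w. {v,w}) {w \<in> N v. {v,w} \<in> F}" by (auto simp: inj_on_def doubleton_eq_iff)
  thus ?thesis unfolding degree_def eq by (simp add: card_image)
qed

lemma deg_full: assumes "symN V N" "v \<in> V"
  shows "degree (edg V N) v = card (N v)"
proof -
  have "{w\<in>N v. {v,w}\<in>edg V N} = N v" using assms unfolding edg_def by auto
  thus ?thesis using deg_sub[OF assms order_refl] by simp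
qed

lemma graph_edg: assumes "symN V N" "finite V" shows "graph V (edg V N)"
  unfolding graph_def
proof (intro conjI ballI)
  show "finite V" by fact
  fix e assume "e \<in> edg V N"
  then obtain a b where e: "e = {a,b}" "a \<in> V" "b \<in> N a" unfolding edg_def by blast
  have "b \<in> V" "b \<noteq> a" using e assms(1) unfolding symN_def by blast+
  thus "e \<subseteq> V" "card e = 2" using e by auto
qed

lemma finite_edg: assumes "symN V N" "finite V" shows "finite (edg V N)"
proof -
  have "edg V N \<subseteq> Pow V" using assms unfolding symN_def edg_def by blast
  thus ?thesis using assms(2) finite_subset by blast
qed

definition ex2 :: "bool \<Rightarrow> bool \<Rightarrow> bool \<Rightarrow> bool" where
  "ex2 p q r \<longleftrightarrow> (p \<and> q \<and> \<not> r) \<or> (p \<and> \<not> q \<and> r) \<or> (\<not> p \<and> q \<and> r)"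

lemma ex2_of: assumes "symN V N" "v \<in> V" "F \<subseteq> edg V N" "degree F v = 2"
  "N v = {a,b,c}" "a \<noteq> b" "a \<noteq> c" "b \<noteq> c"
  shows "ex2 ({v,a} \<in> F) ({v,b} \<in> F) ({v,c} \<in> F)"
proof -
  have c2: "card {w \<in> {a,b,c}. {v,w} \<in> F} = 2" using deg_sub[OF assms(1-3)] assms(4,5) by simp
  have eq: "{w \<in> {a,b,c}. {v,w} \<in> F} = (if {v,a}\<in>F then {a} else {}) \<union> (if {v,b}\<in>F then {b} else {}) \<union> (if {v,c}\<in>F then {c} else {})"
    by auto
  have "card ((if {v,a}\<in>F then {a} else {}) \<union> (if {v,b}\<in>F then {b} else {}) \<union> (if {v,c}\<in>F then {c} else {})) = 2"
    using c2 unfolding eq .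
  thus ?thesis using assms(6-8) unfolding ex2_def
    by (cases "{v,a} \<in> F"; cases "{v,b} \<in> F"; cases "{v,c} \<in> F"; simp)
qed

lemma lp_vx: "lp m i = (if i = Suc m then vx i 7 else vx i 0)" by (simp add: lp_def)

lemma card_nb: assumes "1 \<le> K" "K \<le> m" "v \<in> VV K m" shows "card (nbr K m v) = 3"
proof -
  obtain j s where js: "j \<le> Suc m" "s \<in> slots K m j" "v = vx j s" using assms(3) unfolding VV_def by auto
  have s8: "s < 8" using js slots_lt by auto
  have "card (nb K m j s) = 3"
  proof -
    consider "j = 0" | "j = Suc m" | "0 < j \<and> j < K" | "K \<le> j \<and> j \<le> m" using js assms by linarith
    then show ?thesis
    proof cases
      case 1 
      have "s \<in> {2,3,4,5,7}" using js 1 by (simp add: slL0)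
      thus ?thesis using 1 assms by (auto simp: nbL0 leafnb_def lp_vx)
    next
      case 2
      have "s \<in> {2,3,4,5,7}" using js 2 by (simp add: slL1)
      thus ?thesis using 2 assms by (auto simp: nbL1 leafnb_def rp_vx)
    next
      case 3
      have "s \<in> {0,1,2,3,4,5,6,7}" using js 3 assms by (simp add: slT)
      thus ?thesis using 3 assms by (auto simp: nbT leafnb_def rp_vx lp_vx)
    next
      case 4
      have "s \<in> {0,1,2,3}" using js 4 assms by (simp add: slD)
      thus ?thesis using 4 assms by (auto simp: nbD rp_vx lp_vx)
    qed
  qed
  thus ?thesis using js s8 by simp
qed

definition EE :: "nat \<Rightarrow> nat \<Rightarrow> nat set set" where "EE K m = edg (VV K m) (nbr K m)"

lemma finite_VV: "finite (VV K m)"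
proof -
  have "\<forall>j. finite (slots K m j)" by (simp add: slots_def)
  thus ?thesis unfolding VV_def by auto
qed

lemma symN_VV: "1 \<le> K \<Longrightarrow> K \<le> m \<Longrightarrow> symN (VV K m) (nbr K m)"
  unfolding symN_def using nbr_sym by blast

lemma cubic_G: "1 \<le> K \<Longrightarrow> K \<le> m \<Longrightarrow> cubic (VV K m) (EE K m)"
  unfolding cubic_def EE_def
  using graph_edg[OF symN_VV finite_VV] deg_full[OF symN_VV] card_nb by auto

lemma adj_sym: "sym (adj E)" unfolding adj_def sym_def by (auto simp: insert_commute)

lemma stp: assumes "1 \<le> K" "K \<le> m" "(r,v) \<in> (adj (EE K m))\<^sup>*" "v \<in> VV K m" "w \<in> nbr K m v"
  shows "(r,w) \<in> (adj (EE K m))\<^sup>*"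
proof -
  have "(v,w) \<in> adj (EE K m)" using assms unfolding adj_def EE_def edg_def by auto
  thus ?thesis using assms(3) by simp
qed

lemma reach_rp: assumes "1 \<le> K" "K \<le> m" shows "j \<le> m \<Longrightarrow> (vx 0 7, rp j) \<in> (adj (EE K m))\<^sup>*"
proof (induction j)
  case 0 thus ?case by (simp add: rp_def)
next
  case (Suc j)
  have P: "rp j \<in> VV K m \<and> lp m (Suc j) \<in> nbr K m (rp j)" using port[OF assms, of j] Suc by simp
  have a: "(vx 0 7, vx (Suc j) 0) \<in> (adj (EE K m))\<^sup>*"
    using stp[OF assms Suc.IH _] P Suc by (simp add: lp_def)
  have b: "vx (Suc j) 0 \<in> VV K m" using port[OF assms, of j] Suc by (simp add: lp_def)
  show ?case
  proof (cases "Suc j < K")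
    case True
    thus ?thesis using stp[OF assms a b] assms Suc by (simp add: rp_def nbT)
  next
    case False
    have c: "(vx 0 7, vx (Suc j) 2) \<in> (adj (EE K m))\<^sup>*" using stp[OF assms a b] assms Suc False by (simp add: nbD)
    have d: "vx (Suc j) 2 \<in> VV K m" using assms Suc False by (simp add: slD)
    show ?thesis using stp[OF assms c d] assms Suc False by (simp add: nbD rp_def)
  qed
qed

lemma reach_all: assumes "1 \<le> K" "K \<le> m" "v \<in> VV K m" shows "(vx 0 7, v) \<in> (adj (EE K m))\<^sup>*"
proof -
  let ?R = "(adj (EE K m))\<^sup>*"
  obtain j s where js: "j \<le> Suc m" "s \<in> slots K m j" "v = vx j s" using assms(3) unfolding VV_def by auto
  note st = stp[OF assms(1,2)]
  consider "j = 0" | "j = Suc m" | "0 < j \<and> j < K" | "K \<le> j \<and> j \<le> m" using js assms by linarith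
  then show ?thesis
  proof cases
    case 1
    have s: "s \<in> {2,3,4,5,7}" using js 1 by (simp add: slL0)
    have r7: "(vx 0 7, vx 0 7) \<in> ?R" by simp
    have r2: "(vx 0 7, vx 0 2) \<in> ?R" using st[OF r7] by (simp add: slL0 nbL0 leafnb_def)
    have r3: "(vx 0 7, vx 0 3) \<in> ?R" using st[OF r7] by (simp add: slL0 nbL0 leafnb_def)
    have r4: "(vx 0 7, vx 0 4) \<in> ?R" using st[OF r2] by (simp add: slL0 nbL0 leafnb_def)
    have r5: "(vx 0 7, vx 0 5) \<in> ?R" using st[OF r2] by (simp add: slL0 nbL0 leafnb_def)
    show ?thesis using s js 1 r2 r3 r4 r5 r7 by (simp only: insert_iff empty_iff; elim disjE; simp)
  next
    case 2
    have s: "s \<in> {2,3,4,5,7}" using js 2 by (simp add: slL1)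
    have a: "(vx 0 7, rp m) \<in> ?R" using reach_rp[OF assms(1,2)] by simp
    have P: "rp m \<in> VV K m \<and> lp m (Suc m) \<in> nbr K m (rp m)" using port[OF assms(1,2), of m] by simp
    have r7: "(vx 0 7, vx (Suc m) 7) \<in> ?R" using st[OF a] P by (simp add: lp_def)
    have r2: "(vx 0 7, vx (Suc m) 2) \<in> ?R" using st[OF r7] by (simp add: slL1 nbL1 leafnb_def)
    have r3: "(vx 0 7, vx (Suc m) 3) \<in> ?R" using st[OF r7] by (simp add: slL1 nbL1 leafnb_def)
    have r4: "(vx 0 7, vx (Suc m) 4) \<in> ?R" using st[OF r2] by (simp add: slL1 nbL1 leafnb_def)
    have r5: "(vx 0 7, vx (Suc m) 5) \<in> ?R" using st[OF r2] by (simp add: slL1 nbL1 leafnb_def)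
    show ?thesis using s js 2 r2 r3 r4 r5 r7 by (simp only: insert_iff empty_iff; elim disjE; simp)
  next
    case 3
    hence c3: "0 < j" "j < K" "K \<le> m" using assms by auto
    have s: "s \<in> {0,1,2,3,4,5,6,7}" using js c3 by (simp add: slT)
    have r1: "(vx 0 7, vx j 1) \<in> ?R" using reach_rp[OF assms(1,2), of j] c3 by (simp add: rp_def)
    note [simp] = slT[OF c3] nbT[OF c3] leafnb_def
    have r0: "(vx 0 7, vx j 0) \<in> ?R" using st[OF r1] c3 by simp
    have r6: "(vx 0 7, vx j 6) \<in> ?R" using st[OF r1] c3 by simp
    have r7: "(vx 0 7, vx j 7) \<in> ?R" using st[OF r6] c3 by simp
    have r2: "(vx 0 7, vx j 2) \<in> ?R" using st[OF r7] c3 by simp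
    have r3: "(vx 0 7, vx j 3) \<in> ?R" using st[OF r7] c3 by simp
    have r4: "(vx 0 7, vx j 4) \<in> ?R" using st[OF r2] c3 by simp
    have r5: "(vx 0 7, vx j 5) \<in> ?R" using st[OF r2] c3 by simp
    show ?thesis using s js r0 r1 r2 r3 r4 r5 r6 r7 by (simp only: insert_iff empty_iff; elim disjE; simp)
  next
    case 4
    hence c4: "0 < K" "K \<le> j" "j \<le> m" using assms by auto
    have s: "s \<in> {0,1,2,3}" using js c4 by (simp add: slD)
    have r1: "(vx 0 7, vx j 1) \<in> ?R" using reach_rp[OF assms(1,2), of j] c4 by (simp add: rp_def)
    note [simp] = slD[OF c4] nbD[OF c4]
    have r2: "(vx 0 7, vx j 2) \<in> ?R" using st[OF r1] c4 by simp
    have r3: "(vx 0 7, vx j 3) \<in> ?R" using st[OF r1] c4 by simp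
    have r0: "(vx 0 7, vx j 0) \<in> ?R" using st[OF r2] c4 by simp
    show ?thesis using s js r0 r1 r2 r3 by (simp only: insert_iff empty_iff; elim disjE; simp)
  qed
qed

lemma connected_G: assumes "1 \<le> K" "K \<le> m" shows "connected_graph (VV K m) (EE K m)"
  unfolding connected_graph_def
proof (intro ballI)
  fix u v assume uv: "u \<in> VV K m" "v \<in> VV K m"
  have s: "sym ((adj (EE K m))\<^sup>*)" using adj_sym sym_rtrancl by blast
  have "(u, vx 0 7) \<in> (adj (EE K m))\<^sup>*" using reach_all[OF assms uv(1)] s unfolding sym_def by blast
  thus "(u, v) \<in> (adj (EE K m))\<^sup>*" using reach_all[OF assms uv(2)] by (rule rtrancl_trans)
qed

lemma leaf_bool: assumes "ex2 (f x a) (f x b) (f x e)" "ex2 (f a x) (f a c) (f a d)" "ex2 (f b x) (f b c) (f b d)"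
  "ex2 (f c a) (f c b) (f c d)" "ex2 (f d a) (f d b) (f d c)" and sym: "\<And>u v. f u v = f v u"
  shows "\<not> f x e \<and> f x a \<and> f x b \<and> f c d \<and> (f a c \<or> f a d)"
  using assms(1-5) sym[of a x] sym[of b x] sym[of c a] sym[of c b] sym[of d a] sym[of d b] sym[of d c]
  unfolding ex2_def by auto

lemma D_bool: assumes "ex2 (f a c) (f a d) (f a L)" "ex2 (f b c) (f b d) (f b R)"
  "ex2 (f c a) (f c b) (f c d)" "ex2 (f d a) (f d b) (f d c)" "\<not> f a L" and sym: "\<And>u v. f u v = f v u"
  shows "\<not> f b R \<and> f a c \<and> f a d \<and> f b c \<and> f b d"
  using assms(1-5) sym[of c a] sym[of c b] sym[of d a] sym[of d b] sym[of d c]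
  unfolding ex2_def by auto

lemma T_bool: assumes "ex2 (f t1 t2) (f t1 t3) (f t1 L)" "ex2 (f t2 t1) (f t2 t3) (f t2 R)"
  "ex2 (f t3 t1) (f t3 t2) (f t3 x)" "\<not> f t3 x" "\<not> f t1 L" and sym: "\<And>u v. f u v = f v u"
  shows "\<not> f t2 R \<and> f t1 t2 \<and> f t1 t3 \<and> f t2 t3"
  using assms(1-5) sym[of t2 t1] sym[of t3 t1] sym[of t3 t2]
  unfolding ex2_def by auto

lemma tf_ex2: assumes "1 \<le> K" "K \<le> m" "two_factor (VV K m) (EE K m) F" "v \<in> VV K m"
  "nbr K m v = {a,b,c}" "a \<noteq> b" "a \<noteq> c" "b \<noteq> c"
  shows "ex2 ({v,a}\<in>F) ({v,b}\<in>F) ({v,c}\<in>F)"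
  using ex2_of[OF symN_VV[OF assms(1,2)] assms(4) _ _ assms(5-8)] assms(3)
  unfolding two_factor_def EE_def using assms(4) by blast

lemma leaf_at: assumes "1 \<le> K" "K \<le> m" "two_factor (VV K m) (EE K m) F" "j \<le> Suc m"
  "{2,3,4,5,7} \<subseteq> slots K m j" "nb K m j 7 = {vx j 2, vx j 3, e}" "e \<noteq> vx j 2" "e \<noteq> vx j 3"
  "nb K m j 2 = {vx j 7, vx j 4, vx j 5}" "nb K m j 3 = {vx j 7, vx j 4, vx j 5}"
  "nb K m j 4 = {vx j 2, vx j 3, vx j 5}" "nb K m j 5 = {vx j 2, vx j 3, vx j 4}"
  shows "{vx j 7, e} \<notin> F \<and> {vx j 7, vx j 2} \<in> F \<and> {vx j 7, vx j 3} \<in> F \<and> {vx j 4, vx j 5} \<in> F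
    \<and> ({vx j 2, vx j 4} \<in> F \<or> {vx j 2, vx j 5} \<in> F)"
proof -
  note T = tf_ex2[OF assms(1-3)]
  have V: "vx j 7 \<in> VV K m" "vx j 2 \<in> VV K m" "vx j 3 \<in> VV K m" "vx j 4 \<in> VV K m" "vx j 5 \<in> VV K m"
    using assms(4,5) by auto
  have d: "vx j 2 \<noteq> vx j 3" "vx j 2 \<noteq> vx j 4" "vx j 2 \<noteq> vx j 5" "vx j 2 \<noteq> vx j 7" "vx j 3 \<noteq> vx j 4"
     "vx j 3 \<noteq> vx j 5" "vx j 3 \<noteq> vx j 7" "vx j 4 \<noteq> vx j 5" "vx j 4 \<noteq> vx j 7" "vx j 5 \<noteq> vx j 7" by simp_all
  have e1: "ex2 ({vx j 7, vx j 2}\<in>F) ({vx j 7, vx j 3}\<in>F) ({vx j 7, e}\<in>F)"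
    using T[OF V(1), of "vx j 2" "vx j 3" e] assms d by simp
  have e2: "ex2 ({vx j 2, vx j 7}\<in>F) ({vx j 2, vx j 4}\<in>F) ({vx j 2, vx j 5}\<in>F)"
    using T[OF V(2), of "vx j 7" "vx j 4" "vx j 5"] assms d by simp
  have e3: "ex2 ({vx j 3, vx j 7}\<in>F) ({vx j 3, vx j 4}\<in>F) ({vx j 3, vx j 5}\<in>F)"
    using T[OF V(3), of "vx j 7" "vx j 4" "vx j 5"] assms d by simp
  have e4: "ex2 ({vx j 4, vx j 2}\<in>F) ({vx j 4, vx j 3}\<in>F) ({vx j 4, vx j 5}\<in>F)"
    using T[OF V(4), of "vx j 2" "vx j 3" "vx j 5"] assms d by simp
  have e5: "ex2 ({vx j 5, vx j 2}\<in>F) ({vx j 5, vx j 3}\<in>F) ({vx j 5, vx j 4}\<in>F)"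
    using T[OF V(5), of "vx j 2" "vx j 3" "vx j 4"] assms d by simp
  show ?thesis
    by (rule leaf_bool[where f="\<lambda>u w. {u,w} \<in> F", OF e1 e2 e3 e4 e5]) (simp add: insert_commute)
qed

lemma leafL0: assumes "1 \<le> K" "K \<le> m" "two_factor (VV K m) (EE K m) F"
  shows "{vx 0 7, lp m 1} \<notin> F \<and> {vx 0 7, vx 0 2} \<in> F \<and> {vx 0 7, vx 0 3} \<in> F \<and> {vx 0 4, vx 0 5} \<in> F
    \<and> ({vx 0 2, vx 0 4} \<in> F \<or> {vx 0 2, vx 0 5} \<in> F)"
  by (rule leaf_at[OF assms]) (auto simp: slL0 nbL0 leafnb_def lp_vx)

lemma leafL1: assumes "1 \<le> K" "K \<le> m" "two_factor (VV K m) (EE K m) F"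
  shows "{vx (Suc m) 7, rp m} \<notin> F \<and> {vx (Suc m) 7, vx (Suc m) 2} \<in> F \<and> {vx (Suc m) 7, vx (Suc m) 3} \<in> F \<and> {vx (Suc m) 4, vx (Suc m) 5} \<in> F
    \<and> ({vx (Suc m) 2, vx (Suc m) 4} \<in> F \<or> {vx (Suc m) 2, vx (Suc m) 5} \<in> F)"
  by (rule leaf_at[OF assms]) (auto simp: slL1 nbL1 leafnb_def rp_vx)

lemma leafT: assumes "1 \<le> K" "K \<le> m" "two_factor (VV K m) (EE K m) F" "0 < j" "j < K"
  shows "{vx j 7, vx j 6} \<notin> F \<and> {vx j 7, vx j 2} \<in> F \<and> {vx j 7, vx j 3} \<in> F \<and> {vx j 4, vx j 5} \<in> F
    \<and> ({vx j 2, vx j 4} \<in> F \<or> {vx j 2, vx j 5} \<in> F)"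
  by (rule leaf_at[OF assms(1-3)]) (use assms in \<open>auto simp: slT nbT leafnb_def\<close>)

lemma D_at: assumes "1 \<le> K" "K \<le> m" "two_factor (VV K m) (EE K m) F" "K \<le> j" "j \<le> m"
  "{vx j 0, rp (j-1)} \<notin> F"
  shows "{vx j 1, lp m (Suc j)} \<notin> F \<and> {vx j 0, vx j 2} \<in> F \<and> {vx j 0, vx j 3} \<in> F \<and> {vx j 1, vx j 2} \<in> F
     \<and> {vx j 1, vx j 3} \<in> F"
proof -
  have K0: "0 < K" using assms by simp
  note T = tf_ex2[OF assms(1-3)]
  note [simp] = slD[OF K0 assms(4,5)] nbD[OF K0 assms(4,5)]
  have V: "vx j 0 \<in> VV K m" "vx j 1 \<in> VV K m" "vx j 2 \<in> VV K m" "vx j 3 \<in> VV K m"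
    using assms by auto
  have "j \<noteq> 0" using assms by auto
  have r: "rp (j-1) \<noteq> vx j 2" "rp (j-1) \<noteq> vx j 3" "lp m (Suc j) \<noteq> vx j 2" "lp m (Suc j) \<noteq> vx j 3"
    using \<open>j \<noteq> 0\<close> by (auto simp: rp_vx lp_vx)
  have e1: "ex2 ({vx j 0, vx j 2}\<in>F) ({vx j 0, vx j 3}\<in>F) ({vx j 0, rp (j-1)}\<in>F)"
    using T[OF V(1), of "vx j 2" "vx j 3" "rp (j-1)"] r by simp
  have e2: "ex2 ({vx j 1, vx j 2}\<in>F) ({vx j 1, vx j 3}\<in>F) ({vx j 1, lp m (Suc j)}\<in>F)"
    using T[OF V(2), of "vx j 2" "vx j 3" "lp m (Suc j)"] r by simp
  have e3: "ex2 ({vx j 2, vx j 0}\<in>F) ({vx j 2, vx j 1}\<in>F) ({vx j 2, vx j 3}\<in>F)"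
    using T[OF V(3), of "vx j 0" "vx j 1" "vx j 3"] by simp
  have e4: "ex2 ({vx j 3, vx j 0}\<in>F) ({vx j 3, vx j 1}\<in>F) ({vx j 3, vx j 2}\<in>F)"
    using T[OF V(4), of "vx j 0" "vx j 1" "vx j 2"] by simp
  show ?thesis
    by (rule D_bool[where f="\<lambda>u w. {u,w} \<in> F", OF e1 e2 e3 e4]) (use assms(6) in \<open>simp_all add: insert_commute\<close>)
qed

lemma T_at: assumes "1 \<le> K" "K \<le> m" "two_factor (VV K m) (EE K m) F" "0 < j" "j < K"
  "{vx j 0, rp (j-1)} \<notin> F"
  shows "{vx j 1, lp m (Suc j)} \<notin> F \<and> {vx j 0, vx j 1} \<in> F \<and> {vx j 0, vx j 6} \<in> F \<and> {vx j 1, vx j 6} \<in> F"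
proof -
  note T = tf_ex2[OF assms(1-3)]
  note [simp] = slT[OF assms(4,5,2)] nbT[OF assms(4,5,2)]
  have V: "vx j 0 \<in> VV K m" "vx j 1 \<in> VV K m" "vx j 6 \<in> VV K m"
    using assms by auto
  have L: "{vx j 7, vx j 6} \<notin> F" using leafT[OF assms(1-5)] by blast
  have j0: "j \<noteq> 0" using assms by simp
  have r: "rp (j-1) \<noteq> vx j 1" "rp (j-1) \<noteq> vx j 6" "lp m (Suc j) \<noteq> vx j 0" "lp m (Suc j) \<noteq> vx j 6"
    using j0 by (auto simp: rp_vx lp_vx)
  have e1: "ex2 ({vx j 0, vx j 1}\<in>F) ({vx j 0, vx j 6}\<in>F) ({vx j 0, rp (j-1)}\<in>F)"
    using T[OF V(1), of "vx j 1" "vx j 6" "rp (j-1)"] r by simp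
  have e2: "ex2 ({vx j 1, vx j 0}\<in>F) ({vx j 1, vx j 6}\<in>F) ({vx j 1, lp m (Suc j)}\<in>F)"
    using T[OF V(2), of "vx j 0" "vx j 6" "lp m (Suc j)"] r by simp
  have e3: "ex2 ({vx j 6, vx j 0}\<in>F) ({vx j 6, vx j 1}\<in>F) ({vx j 6, vx j 7}\<in>F)"
    using T[OF V(3), of "vx j 0" "vx j 1" "vx j 7"] by simp
  show ?thesis
    by (rule T_bool[where f="\<lambda>u w. {u,w} \<in> F", OF e1 e2 e3]) (use assms(6) L in \<open>simp_all add: insert_commute\<close>)
qed

lemma chain: assumes "1 \<le> K" "K \<le> m" "two_factor (VV K m) (EE K m) F"
  shows "i \<le> m \<Longrightarrow> {rp i, lp m (Suc i)} \<notin> F"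
proof (induction i)
  case 0 thus ?case using leafL0[OF assms] by (simp add: rp_def)
next
  case (Suc i)
  have h: "{vx (Suc i) 0, rp (Suc i - 1)} \<notin> F" using Suc by (simp add: lp_def insert_commute)
  show ?case
  proof (cases "Suc i < K")
    case True thus ?thesis using T_at[OF assms _ True h] by (simp add: rp_def)
  next
    case False thus ?thesis using D_at[OF assms _ _ h] Suc by (simp add: rp_def)
  qed
qed

lemma comps_blk: assumes "\<forall>v\<in>V. v \<in> blk v" "\<forall>v\<in>V. blk v \<subseteq> V" "\<forall>v\<in>V. \<forall>u\<in>blk v. blk u = blk v"
  "\<forall>v\<in>V. \<forall>w. {v,w}\<in>F \<longrightarrow> w \<in> blk v" "\<forall>v\<in>V. \<forall>u\<in>blk v. (v,u) \<in> (adj F)\<^sup>*"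
  shows "components V F = blk ` V"
proof -
  have "{u\<in>V. (v,u)\<in>(adj F)\<^sup>*} = blk v" if v: "v \<in> V" for v
  proof
    show "blk v \<subseteq> {u\<in>V. (v,u)\<in>(adj F)\<^sup>*}" using assms(2,5) v by auto
    have "(v,u)\<in>(adj F)\<^sup>* \<Longrightarrow> u \<in> blk v" for u
    proof (induction rule: rtrancl_induct)
      case base thus ?case using assms(1) v by auto
    next
      case (step y z)
      have y: "y \<in> V" using step assms(2) v by auto
      have "{y,z} \<in> F" using step(2) unfolding adj_def by auto
      hence "z \<in> blk y" using assms(4) y by auto
      thus ?case using assms(3) v step(3) by auto
    qed
    thus "{u\<in>V. (v,u)\<in>(adj F)\<^sup>*} \<subseteq> blk v" by auto
  qed
  thus ?thesis unfolding components_def by (auto intro!: image_cong)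
qed

lemma conn_from: assumes "\<forall>u\<in>B. (r,u) \<in> (adj F)\<^sup>*" "v \<in> B" "u \<in> B" shows "(v,u) \<in> (adj F)\<^sup>*"
proof -
  have s: "sym ((adj F)\<^sup>*)" using adj_sym sym_rtrancl by blast
  have "(v, r) \<in> (adj F)\<^sup>*" using assms(1,2) s unfolding sym_def by blast
  thus ?thesis using assms(1,3) by (meson rtrancl_trans)
qed

lemma eR: "{u,w} \<in> F \<Longrightarrow> (u,w) \<in> (adj F)\<^sup>*" unfolding adj_def by auto
lemma eR2: "(r,u) \<in> (adj F)\<^sup>* \<Longrightarrow> {u,w} \<in> F \<Longrightarrow> (r,w) \<in> (adj F)\<^sup>*"
  unfolding adj_def by (auto intro: rtrancl_into_rtrancl)

definition LB :: "nat \<Rightarrow> nat set" where "LB j = {vx j 7, vx j 2, vx j 3, vx j 4, vx j 5}"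
definition TB :: "nat \<Rightarrow> nat set" where "TB j = {vx j 0, vx j 1, vx j 6}"
definition DB :: "nat \<Rightarrow> nat set" where "DB j = {vx j 0, vx j 1, vx j 2, vx j 3}"

definition blk :: "nat \<Rightarrow> nat \<Rightarrow> nat \<Rightarrow> nat set" where
  "blk K m v = (let j = v div 8; s = v mod 8 in if s \<in> {2,3,4,5,7} \<and> (j < K \<or> j = Suc m) then LB j
     else if j < K then TB j else DB j)"

lemma blk_vx: "s < 8 \<Longrightarrow> blk K m (vx j s) = (if s \<in> {2,3,4,5,7} \<and> (j < K \<or> j = Suc m) then LB j
     else if j < K then TB j else DB j)" by (simp add: blk_def)

lemma T_facts: assumes "1 \<le> K" "K \<le> m" "two_factor (VV K m) (EE K m) F" "0 < j" "j < K"
  shows "{vx j 0, rp (j-1)} \<notin> F \<and> {vx j 1, lp m (Suc j)} \<notin> F \<and> {vx j 0, vx j 1} \<in> F \<and> {vx j 0, vx j 6} \<in> F \<and> {vx j 1, vx j 6} \<in> F"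
proof -
  have "{rp (j-1), lp m (Suc (j-1))} \<notin> F" using chain[OF assms(1-3), of "j-1"] assms by simp
  hence h: "{vx j 0, rp (j-1)} \<notin> F" using assms by (simp add: lp_def insert_commute)
  thus ?thesis using T_at[OF assms h] by simp
qed

lemma D_facts: assumes "1 \<le> K" "K \<le> m" "two_factor (VV K m) (EE K m) F" "K \<le> j" "j \<le> m"
  shows "{vx j 0, rp (j-1)} \<notin> F \<and> {vx j 1, lp m (Suc j)} \<notin> F \<and> {vx j 0, vx j 2} \<in> F \<and> {vx j 0, vx j 3} \<in> F \<and> {vx j 1, vx j 2} \<in> F
     \<and> {vx j 1, vx j 3} \<in> F"
proof -
  have "{rp (j-1), lp m (Suc (j-1))} \<notin> F" using chain[OF assms(1-3), of "j-1"] assms by simp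
  hence h: "{vx j 0, rp (j-1)} \<notin> F" using assms by (simp add: lp_def insert_commute)
  thus ?thesis using D_at[OF assms h] by simp
qed

lemma F_nbr: assumes "1 \<le> K" "K \<le> m" "two_factor (VV K m) (EE K m) F" "v \<in> VV K m" "{v,w} \<in> F"
  shows "w \<in> nbr K m v"
proof -
  have "{v,w} \<in> {e \<in> EE K m. v \<in> e}" using assms unfolding two_factor_def by auto
  hence "{v,w} \<in> (\<lambda>w. {v,w}) ` nbr K m v" using edg_at[OF symN_VV[OF assms(1,2)] assms(4)] unfolding EE_def by simp
  thus ?thesis by (auto simp: doubleton_eq_iff)
qed

lemma LB_conn: assumes "{vx j 7, vx j 2} \<in> F" "{vx j 7, vx j 3} \<in> F" "{vx j 4, vx j 5} \<in> F"
    "{vx j 2, vx j 4} \<in> F \<or> {vx j 2, vx j 5} \<in> F"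
  shows "\<forall>u\<in>LB j. (vx j 7, u) \<in> (adj F)\<^sup>*"
proof -
  have r2: "(vx j 7, vx j 2) \<in> (adj F)\<^sup>*" using eR[OF assms(1)] .
  have r3: "(vx j 7, vx j 3) \<in> (adj F)\<^sup>*" using eR[OF assms(2)] .
  have f54: "{vx j 5, vx j 4} \<in> F" using assms(3) by (simp add: insert_commute)
  have "(vx j 7, vx j 4) \<in> (adj F)\<^sup>* \<and> (vx j 7, vx j 5) \<in> (adj F)\<^sup>*"
    using assms(4)
  proof
    assume a: "{vx j 2, vx j 4} \<in> F"
    have "(vx j 7, vx j 4) \<in> (adj F)\<^sup>*" using eR2[OF r2 a] .
    thus ?thesis using eR2[OF _ assms(3)] by blast
  next
    assume a: "{vx j 2, vx j 5} \<in> F"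
    have "(vx j 7, vx j 5) \<in> (adj F)\<^sup>*" using eR2[OF r2 a] .
    thus ?thesis using eR2[OF _ f54] by blast
  qed
  thus ?thesis using r2 r3 unfolding LB_def by auto
qed

lemma TB_conn: assumes "{vx j 0, vx j 1} \<in> F" "{vx j 0, vx j 6} \<in> F"
  shows "\<forall>u\<in>TB j. (vx j 0, u) \<in> (adj F)\<^sup>*"
  using eR[OF assms(1)] eR[OF assms(2)] unfolding TB_def by auto

lemma DB_conn: assumes "{vx j 0, vx j 2} \<in> F" "{vx j 0, vx j 3} \<in> F" "{vx j 1, vx j 2} \<in> F"
  shows "\<forall>u\<in>DB j. (vx j 0, u) \<in> (adj F)\<^sup>*"
proof -
  have "{vx j 2, vx j 1} \<in> F" using assms(3) by (simp add: insert_commute)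
  thus ?thesis using eR[OF assms(1)] eR[OF assms(2)] eR2[OF eR[OF assms(1)]] unfolding DB_def by auto
qed

lemma blk_props: assumes "1 \<le> K" "K \<le> m" "v \<in> VV K m"
  shows "v \<in> blk K m v \<and> blk K m v \<subseteq> VV K m \<and> (\<forall>u\<in>blk K m v. blk K m u = blk K m v)"
proof -
  obtain j s where js: "j \<le> Suc m" "s \<in> slots K m j" "v = vx j s" using assms(3) unfolding VV_def by auto
  consider "j = 0" | "j = Suc m" | "0 < j \<and> j < K" | "K \<le> j \<and> j \<le> m" using js assms by linarith
  then show ?thesis
  proof cases
    case 1 thus ?thesis using js assms by (auto simp: slL0 blk_vx LB_def)
  next
    case 2 thus ?thesis using js assms by (auto simp: slL1 blk_vx LB_def)
  next
    case 3 thus ?thesis using js assms by (auto simp: slT blk_vx LB_def TB_def)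
  next
    case 4 thus ?thesis using js assms by (auto simp: slD blk_vx DB_def)
  qed
qed

lemma blk_F: assumes "1 \<le> K" "K \<le> m" "two_factor (VV K m) (EE K m) F" "v \<in> VV K m"
  shows "(\<forall>w. {v,w}\<in>F \<longrightarrow> w \<in> blk K m v) \<and> (\<forall>u\<in>blk K m v. (v,u) \<in> (adj F)\<^sup>*)"
proof -
  obtain j s where js: "j \<le> Suc m" "s \<in> slots K m j" "v = vx j s" using assms(4) unfolding VV_def by auto
  have s8: "s < 8" using js slots_lt by auto
  have nbw: "\<And>w. {v,w} \<in> F \<Longrightarrow> w \<in> nb K m j s" using F_nbr[OF assms] js s8 by simp
  consider "j = 0" | "j = Suc m" | "0 < j \<and> j < K" | "K \<le> j \<and> j \<le> m" using js assms by linarith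
  then show ?thesis
  proof cases
    case 1
    have s: "s \<in> {2,3,4,5,7}" using js 1 by (simp add: slL0)
    have b: "blk K m v = LB 0" using js 1 s assms by (auto simp: blk_vx)
    note L = leafL0[OF assms(1-3)]
    have c: "\<forall>u\<in>LB 0. (vx 0 7, u) \<in> (adj F)\<^sup>*" using LB_conn[of 0 F] L by blast
    have vin: "v \<in> LB 0" using js 1 s by (auto simp: LB_def)
    have A: "\<forall>w. {v,w}\<in>F \<longrightarrow> w \<in> LB 0"
    proof (intro allI impI)
      fix w assume w: "{v,w} \<in> F"
      have "w \<in> nb K m 0 s" using nbw[OF w] 1 by simp
      thus "w \<in> LB 0" using s w L js 1 by (auto simp: nbL0 leafnb_def LB_def)
    qed
    show ?thesis using A b conn_from[OF c vin] by auto
  next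
    case 2
    have s: "s \<in> {2,3,4,5,7}" using js 2 by (simp add: slL1)
    have b: "blk K m v = LB (Suc m)" using js 2 s assms by (auto simp: blk_vx)
    note L = leafL1[OF assms(1-3)]
    have c: "\<forall>u\<in>LB (Suc m). (vx (Suc m) 7, u) \<in> (adj F)\<^sup>*" using LB_conn[of "Suc m" F] L by blast
    have vin: "v \<in> LB (Suc m)" using js 2 s by (auto simp: LB_def)
    have A: "\<forall>w. {v,w}\<in>F \<longrightarrow> w \<in> LB (Suc m)"
    proof (intro allI impI)
      fix w assume w: "{v,w} \<in> F"
      have "w \<in> nb K m (Suc m) s" using nbw[OF w] 2 by simp
      thus "w \<in> LB (Suc m)" using s w L js 2 by (auto simp: nbL1 leafnb_def LB_def)
    qed
    show ?thesis using A b conn_from[OF c vin] by auto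
  next
    case 3
    hence c3: "0 < j" "j < K" "K \<le> m" using assms by auto
    have s: "s \<in> {0,1,2,3,4,5,6,7}" using js c3 by (simp add: slT)
    note L = leafT[OF assms(1-3) c3(1,2)]
    note TF = T_facts[OF assms(1-3) c3(1,2)]
    have L': "{vx j 6, vx j 7} \<notin> F" using L by (simp add: insert_commute)
    show ?thesis
    proof (cases "s \<in> {2,3,4,5,7}")
      case True
      have b: "blk K m v = LB j" using js c3 True by (auto simp: blk_vx)
      have c: "\<forall>u\<in>LB j. (vx j 7, u) \<in> (adj F)\<^sup>*" using LB_conn[of j F] L by blast
      have vin: "v \<in> LB j" using js True by (auto simp: LB_def)
      have A: "\<forall>w. {v,w}\<in>F \<longrightarrow> w \<in> LB j"
      proof (intro allI impI)
        fix w assume w: "{v,w} \<in> F"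
        have "w \<in> nb K m j s" using nbw[OF w] by simp
        thus "w \<in> LB j" using True w L js c3 by (auto simp: nbT leafnb_def LB_def)
      qed
      show ?thesis using A b conn_from[OF c vin] by auto
    next
      case False
      hence s': "s \<in> {0,1,6}" using s by auto
      have b: "blk K m v = TB j" using js c3 False s' by (auto simp: blk_vx)
      have c: "\<forall>u\<in>TB j. (vx j 0, u) \<in> (adj F)\<^sup>*" using TB_conn[of j F] TF by blast
      have vin: "v \<in> TB j" using js s' by (auto simp: TB_def)
      have A: "\<forall>w. {v,w}\<in>F \<longrightarrow> w \<in> TB j"
      proof (intro allI impI)
        fix w assume w: "{v,w} \<in> F"
        have "w \<in> nb K m j s" using nbw[OF w] by simp
        thus "w \<in> TB j" using s' w L' TF js c3 by (auto simp: nbT TB_def)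
      qed
      show ?thesis using A b conn_from[OF c vin] by auto
    qed
  next
    case 4
    hence c4: "0 < K" "K \<le> j" "j \<le> m" using assms by auto
    have s: "s \<in> {0,1,2,3}" using js c4 by (simp add: slD)
    note DF = D_facts[OF assms(1-3) c4(2,3)]
    have b: "blk K m v = DB j" using js c4 s by (auto simp: blk_vx)
    have c: "\<forall>u\<in>DB j. (vx j 0, u) \<in> (adj F)\<^sup>*" using DB_conn[of j F] DF by blast
    have vin: "v \<in> DB j" using js s by (auto simp: DB_def)
    have A: "\<forall>w. {v,w}\<in>F \<longrightarrow> w \<in> DB j"
    proof (intro allI impI)
      fix w assume w: "{v,w} \<in> F"
      have "w \<in> nb K m j s" using nbw[OF w] by simp
      thus "w \<in> DB j" using s w DF js c4 by (auto simp: nbD DB_def)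
    qed
    show ?thesis using A b conn_from[OF c vin] by auto
  qed
qed

lemma comps_G: assumes "1 \<le> K" "K \<le> m" "two_factor (VV K m) (EE K m) F"
  shows "components (VV K m) F = blk K m ` VV K m"
  apply (rule comps_blk)
  using blk_props[OF assms(1,2)] blk_F[OF assms] by blast+

lemma card_LB[simp]: "card (LB j) = 5" by (simp add: LB_def)
lemma card_TB[simp]: "card (TB j) = 3" by (simp add: TB_def)
lemma card_DB[simp]: "card (DB j) = 4" by (simp add: DB_def)

lemma odd_blocks: assumes "1 \<le> K" "K \<le> m"
  shows "{C \<in> blk K m ` VV K m. odd (card C)} = LB ` (insert (Suc m) {..<K}) \<union> TB ` {1..<K}"
proof
  show "{C \<in> blk K m ` VV K m. odd (card C)} \<subseteq> LB ` (insert (Suc m) {..<K}) \<union> TB ` {1..<K}"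
  proof
    fix C assume "C \<in> {C \<in> blk K m ` VV K m. odd (card C)}"
    then obtain v where v: "v \<in> VV K m" "C = blk K m v" "odd (card C)" by auto
    obtain j s where js: "j \<le> Suc m" "s \<in> slots K m j" "v = vx j s" using v(1) unfolding VV_def by auto
    have s8: "s < 8" using js slots_lt by auto
    have C: "C = (if s \<in> {2,3,4,5,7} \<and> (j < K \<or> j = Suc m) then LB j else if j < K then TB j else DB j)"
      using v js s8 by (simp add: blk_vx)
    show "C \<in> LB ` (insert (Suc m) {..<K}) \<union> TB ` {1..<K}"
    proof (cases "s \<in> {2,3,4,5,7} \<and> (j < K \<or> j = Suc m)")
      case True thus ?thesis using C by auto
    next
      case F: False
      show ?thesis
      proof (cases "j < K")
        case True
        have "j \<noteq> 0"
        proof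
          assume "j = 0" thus False using js F assms by (simp add: slL0)
        qed
        thus ?thesis using C F True by auto
      next
        case False
        have "C = DB j" using C F False by (simp only: if_False if_not_P)
        thus ?thesis using v(3) by simp
      qed
    qed
  qed
next
  show "LB ` (insert (Suc m) {..<K}) \<union> TB ` {1..<K} \<subseteq> {C \<in> blk K m ` VV K m. odd (card C)}"
  proof
    fix C assume "C \<in> LB ` (insert (Suc m) {..<K}) \<union> TB ` {1..<K}"
    then consider j where "C = LB j" "j = Suc m \<or> j < K" | j where "C = TB j" "0 < j" "j < K" by auto
    then show "C \<in> {C \<in> blk K m ` VV K m. odd (card C)}"
    proof cases
      case 1
      have "vx j 7 \<in> VV K m" using 1 assms by (auto simp: slots_def)
      moreover have "blk K m (vx j 7) = C" using 1 by (auto simp: blk_vx)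
      ultimately show ?thesis using 1 by auto
    next
      case 2
      have "vx j 0 \<in> VV K m" using 2 assms by (auto simp: slots_def)
      moreover have "blk K m (vx j 0) = C" using 2 by (simp add: blk_vx)
      ultimately show ?thesis using 2 by auto
    qed
  qed
qed

lemma card_odd_blocks: assumes "1 \<le> K" "K \<le> m"
  shows "card (LB ` (insert (Suc m) {..<K}) \<union> TB ` {1..<K}) = 2 * K"
proof -
  have i1: "inj_on LB (insert (Suc m) {..<K})" unfolding inj_on_def
  proof (intro ballI impI)
    fix a b assume e: "LB a = LB b"
    have "vx a 7 \<in> LB a" by (simp add: LB_def)
    hence "vx a 7 \<in> LB b" using e by (simp only:)
    hence "vx a 7 \<in> {vx b 7, vx b 2, vx b 3, vx b 4, vx b 5}" by (simp only: LB_def)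
    thus "a = b" by simp
  qed
  have i2: "inj_on TB {1..<K}" unfolding inj_on_def
  proof (intro ballI impI)
    fix a b assume e: "TB a = TB b"
    have "vx a 0 \<in> TB a" by (simp add: TB_def)
    hence "vx a 0 \<in> TB b" using e by (simp only:)
    hence "vx a 0 \<in> {vx b 0, vx b 1, vx b 6}" by (simp only: TB_def)
    thus "a = b" by simp
  qed
  have d: "LB ` (insert (Suc m) {..<K}) \<inter> TB ` {1..<K} = {}"
  proof (rule ccontr)
    assume "LB ` (insert (Suc m) {..<K}) \<inter> TB ` {1..<K} \<noteq> {}"
    then obtain a b where e: "LB a = TB b" by auto
    have "vx a 7 \<in> LB a" by (simp add: LB_def)
    hence "vx a 7 \<in> TB b" using e by (simp only:)
    hence "vx a 7 \<in> {vx b 0, vx b 1, vx b 6}" by (simp only: TB_def)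
    thus False by simp
  qed
  have "card (LB ` (insert (Suc m) {..<K})) = K + 1" using card_image[OF i1] assms by simp
  moreover have "card (TB ` {1..<K}) = K - 1" using card_image[OF i2] by simp
  ultimately show ?thesis using card_Un_disjoint[OF _ _ d] assms by simp
qed

lemma odd_circ_G: assumes "1 \<le> K" "K \<le> m" "two_factor (VV K m) (EE K m) F"
  shows "odd_circuits (VV K m) F = 2 * K"
  unfolding odd_circuits_def comps_G[OF assms] odd_blocks[OF assms(1,2)] using card_odd_blocks[OF assms(1,2)] .

definition leafnb0 :: "nat \<Rightarrow> nat \<Rightarrow> nat set" where
 "leafnb0 j s = (if s=7 then {vx j 2, vx j 3} else if s=2 then {vx j 7, vx j 4} else if s=3 then {vx j 7, vx j 5}
    else if s = 4 then {vx j 2, vx j 5} else if s=5 then {vx j 3, vx j 4} else {})"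

definition nb0 :: "nat \<Rightarrow> nat \<Rightarrow> nat \<Rightarrow> nat \<Rightarrow> nat set" where
 "nb0 K m j s = (if j = 0 \<or> j = Suc m then leafnb0 j s
   else if j < K then (if s = 0 then {vx j 1, vx j 6} else if s = 1 then {vx j 0, vx j 6}
         else if s = 6 then {vx j 0, vx j 1} else leafnb0 j s)
   else if j \<le> m then (if s=0 then {vx j 2, vx j 3} else if s=1 then {vx j 2, vx j 3}
         else if s=2 then {vx j 0, vx j 1} else if s=3 then {vx j 0, vx j 1} else {})
   else {})"

definition nbr0 :: "nat \<Rightarrow> nat \<Rightarrow> nat \<Rightarrow> nat set" where
 "nbr0 K m v = nb0 K m (v div 8) (v mod 8)"

lemma nbr0_vx[simp]: "s < 8 \<Longrightarrow> nbr0 K m (vx j s) = nb0 K m j s" by (simp add: nbr0_def)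

lemma nb0_props: assumes "1 \<le> K" "K \<le> m" "v \<in> VV K m"
  shows "nbr0 K m v \<subseteq> nbr K m v \<and> card (nbr0 K m v) = 2 \<and> (\<forall>w\<in>nbr0 K m v. v \<in> nbr0 K m w)"
proof -
  obtain j s where js: "j \<le> Suc m" "s \<in> slots K m j" "v = vx j s" using assms(3) unfolding VV_def by auto
  have s8: "s < 8" using js slots_lt by auto
  consider "j = 0" | "j = Suc m" | "0 < j \<and> j < K" | "K \<le> j \<and> j \<le> m" using js assms by linarith
  then show ?thesis
  proof cases
    case 1
    have s: "s \<in> {2,3,4,5,7}" using js 1 by (simp add: slL0)
    thus ?thesis using js 1 by (auto simp: nb0_def nbL0 leafnb_def leafnb0_def)
  next
    case 2
    have s: "s \<in> {2,3,4,5,7}" using js 2 by (simp add: slL1)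
    thus ?thesis using js 2 by (auto simp: nb0_def nbL1 leafnb_def leafnb0_def)
  next
    case 3
    hence c3: "0 < j" "j < K" "K \<le> m" using assms by auto
    have s: "s \<in> {0,1,2,3,4,5,6,7}" using js c3 by (simp add: slT)
    thus ?thesis using js c3 by (auto simp: nb0_def nbT leafnb_def leafnb0_def)
  next
    case 4
    hence c4: "0 < K" "K \<le> j" "j \<le> m" using assms by auto
    have s: "s \<in> {0,1,2,3}" using js c4 by (simp add: slD)
    thus ?thesis using js c4 by (auto simp: nb0_def nbD)
  qed
qed

lemma F0_two: assumes "1 \<le> K" "K \<le> m"
  shows "two_factor (VV K m) (EE K m) (edg (VV K m) (nbr0 K m))"
proof -
  have sy: "symN (VV K m) (nbr0 K m)" unfolding symN_def
    using nb0_props[OF assms] nbr_sym[OF assms] by blast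
  have sub: "edg (VV K m) (nbr0 K m) \<subseteq> EE K m" unfolding EE_def edg_def using nb0_props[OF assms] by blast
  show ?thesis unfolding two_factor_def using sub deg_full[OF sy] nb0_props[OF assms] by auto
qed

lemma finE: assumes "cubic V E" shows "finite E"
proof -
  have "E \<subseteq> Pow V" "finite V" using assms unfolding cubic_def graph_def by auto
  thus ?thesis using finite_subset by blast
qed

lemma one_two: assumes "cubic V E" "one_factor V E M" shows "two_factor V E (E - M)"
  unfolding two_factor_def
proof (intro conjI ballI)
  show "E - M \<subseteq> E" by auto
  fix v assume v: "v \<in> V"
  have fin: "finite {e\<in>E. v\<in>e}" using finE[OF assms(1)] by simp
  have "{e\<in>E-M. v\<in>e} = {e\<in>E. v\<in>e} - {e\<in>M. v\<in>e}" by auto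
  moreover have "{e\<in>M. v\<in>e} \<subseteq> {e\<in>E. v\<in>e}" using assms(2) unfolding one_factor_def by auto
  ultimately have "card {e\<in>E-M. v\<in>e} = card {e\<in>E. v\<in>e} - card {e\<in>M. v\<in>e}"
    using card_Diff_subset[OF finite_subset[OF _ fin]] by simp
  thus "degree (E - M) v = 2" using assms v unfolding degree_def cubic_def one_factor_def by simp
qed

lemma two_one: assumes "cubic V E" "two_factor V E F" shows "one_factor V E (E - F)"
  unfolding one_factor_def
proof (intro conjI ballI)
  show "E - F \<subseteq> E" by auto
  fix v assume v: "v \<in> V"
  have fin: "finite {e\<in>E. v\<in>e}" using finE[OF assms(1)] by simp
  have "{e\<in>E-F. v\<in>e} = {e\<in>E. v\<in>e} - {e\<in>F. v\<in>e}" by auto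
  moreover have "{e\<in>F. v\<in>e} \<subseteq> {e\<in>E. v\<in>e}" using assms(2) unfolding two_factor_def by auto
  ultimately have "card {e\<in>E-F. v\<in>e} = card {e\<in>E. v\<in>e} - card {e\<in>F. v\<in>e}"
    using card_Diff_subset[OF finite_subset[OF _ fin]] by simp
  thus "degree (E - F) v = 1" using assms v unfolding degree_def cubic_def two_factor_def by simp
qed

lemma oddness_G: assumes "1 \<le> K" "K \<le> m" shows "oddness (VV K m) (EE K m) = 2 * K"
proof -
  have "{odd_circuits (VV K m) F | F. two_factor (VV K m) (EE K m) F} = {2 * K}"
  proof (intro equalityI subsetI)
    fix x assume "x \<in> {odd_circuits (VV K m) F | F. two_factor (VV K m) (EE K m) F}"
    then obtain F where "x = odd_circuits (VV K m) F" "two_factor (VV K m) (EE K m) F" by blast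
    thus "x \<in> {2 * K}" using odd_circ_G[OF assms] by simp
  next
    fix x assume "x \<in> {2 * K}"
    thus "x \<in> {odd_circuits (VV K m) F | F. two_factor (VV K m) (EE K m) F}"
    proof -
      have "x = odd_circuits (VV K m) (edg (VV K m) (nbr0 K m)) \<and> two_factor (VV K m) (EE K m) (edg (VV K m) (nbr0 K m))"
        using odd_circ_G[OF assms F0_two[OF assms]] F0_two[OF assms] \<open>x \<in> {2*K}\<close> by simp
      thus ?thesis by blast
    qed
  qed
  thus ?thesis unfolding oddness_def by simp
qed

lemma mu3_G: assumes "1 \<le> K" "K \<le> m" shows "mu3 (VV K m) (EE K m) \<ge> m + 1 - K"
proof -
  let ?V = "VV K m" and ?E = "EE K m"
  let ?S = "{card (?E - (M1 \<union> M2 \<union> M3)) | M1 M2 M3.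
      one_factor ?V ?E M1 \<and> one_factor ?V ?E M2 \<and> one_factor ?V ?E M3}"
  have cub: "cubic ?V ?E" using cubic_G[OF assms] .
  have fE: "finite ?E" using finE[OF cub] .
  have M0: "one_factor ?V ?E (?E - edg ?V (nbr0 K m))" using two_one[OF cub F0_two[OF assms]] .
  have ne: "?S \<noteq> {}" using M0 by blast
  have fin: "finite ?S"
  proof (rule finite_subset[of _ "{..card ?E}"])
    show "?S \<subseteq> {..card ?E}" using fE by (auto intro: card_mono)
  qed simp
  have "\<forall>x\<in>?S. m + 1 - K \<le> x"
  proof
    fix x assume "x \<in> ?S"
    then obtain M1 M2 M3 where M: "one_factor ?V ?E M1" "one_factor ?V ?E M2" "one_factor ?V ?E M3"
      "x = card (?E - (M1 \<union> M2 \<union> M3))" by blast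
    have sub: "(\<lambda>j. {vx j 0, vx j 2}) ` {K..m} \<subseteq> ?E - (M1 \<union> M2 \<union> M3)"
    proof
      fix e assume "e \<in> (\<lambda>j. {vx j 0, vx j 2}) ` {K..m}"
      then obtain j where j: "K \<le> j" "j \<le> m" "e = {vx j 0, vx j 2}" by auto
      have "e \<in> ?E - M1" using D_facts[OF assms one_two[OF cub M(1)] j(1,2)] j by simp
      moreover have "e \<in> ?E - M2" using D_facts[OF assms one_two[OF cub M(2)] j(1,2)] j by simp
      moreover have "e \<in> ?E - M3" using D_facts[OF assms one_two[OF cub M(3)] j(1,2)] j by simp
      ultimately show "e \<in> ?E - (M1 \<union> M2 \<union> M3)" by auto
    qed
    have inj: "inj_on (\<lambda>j. {vx j 0, vx j 2}) {K..m}" unfolding inj_on_def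
    proof (intro ballI impI)
      fix a b assume "{vx a 0, vx a 2} = {vx b 0, vx b 2}"
      hence "vx a 0 \<in> {vx b 0, vx b 2}" by blast
      thus "a = b" by auto
    qed
    have "card ((\<lambda>j. {vx j 0, vx j 2}) ` {K..m}) = m + 1 - K" using card_image[OF inj] by simp
    moreover have "card ((\<lambda>j. {vx j 0, vx j 2}) ` {K..m}) \<le> x"
      using card_mono[OF _ sub] fE M(4) by simp
    ultimately show "m + 1 - K \<le> x" by simp
  qed
  thus ?thesis unfolding mu3_def using Min_ge_iff[OF fin ne] by blast
qed

theorem mainTheorem5:
  fixes k c :: nat
  assumes "k \<ge> 1" and "c \<ge> 1"
  shows "\<exists>(V :: nat set) E. cubic V E \<and> connected_graph V E
           \<and> (\<exists>F. two_factor V E F) \<and> oddness V E = 2 * k \<and> mu3 V E \<ge> c"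
proof -
  let ?m = "k - 1 + c"
  have a: "1 \<le> k" "k \<le> ?m" using assms by auto
  have "mu3 (VV k ?m) (EE k ?m) \<ge> ?m + 1 - k" using mu3_G[OF a] .
  moreover have "?m + 1 - k = c" using assms by simp
  ultimately show ?thesis using cubic_G[OF a] connected_G[OF a] F0_two[OF a] oddness_G[OF a] by metis
qed

end
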